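(* Let $\Gamma$ be a semigroup of maps $\mathbb{Z}^d \to \mathbb{Z}^d$, and suppose there is a finite set $\{s_1, \ldots, s_r\}$ of polynomial walks in $\Gamma$ such that $\{s_j(n) : n \geq 0,\ j = 1, \ldots, r\}$ generates $\Gamma$. Let $v \in \mathbb{Z}^d$ be such that the orbit $\Gamma v$ is not contained in any proper affine subspace of $\mathbb{R}^d$. Then there exists a polynomial walk $S : \mathbb{Z}_{\geq 0} \to \Gamma$ and polynomials $p_1(t), \ldots, p_d(t) \in \mathbb{Z}[t]$ such that $S(n)v = (p_1(n), \ldots, p_d(n))$ for all $n \geq 0$ and $1, p_1(t), \ldots, p_d(t)$ are linearly independent over $\mathbb{R}$. In particular, the sequence $(S(n)v)_{n \geq 0}$ is hyperplane-fleeing.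
   Context: A polynomial walk in a semigroup $\Gamma$ of maps $\mathbb{Z}^d \to \mathbb{Z}^d$ is a map $s : \mathbb{Z}_{\geq 0} \to \Gamma$ such that (1) there are polynomials $q_1, \ldots, q_d \in \mathbb{Z}[t_1, \ldots, t_{d+1}]$ with $s(n)x = (q_1(n, x_1, \ldots, x_d), \ldots, q_d(n, x_1, \ldots, x_d))$ for all $x \in \mathbb{Z}^d$ and $n \geq 0$, and (2) $s(0)$ is the identity map. A set (or sequence) in $\mathbb{R}^d$ is hyperplane-fleeing if it is not contained in any proper affine subspace of $\mathbb{R}^d$. *)

theory Defs
  imports "HOL-Analysis.Analysis" "HOL-Computational_Algebra.Polynomial"
begin

text \<open>Integer polynomial functions in variables indexed by type 'v:
  the smallest class of functions (('v \<Rightarrow> int) \<Rightarrow> int) containing constants and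
  coordinate projections, closed under sums and products; i.e. exactly the
  evaluation maps of polynomials in Z[t_v : v].\<close>
inductive int_poly_fun :: "(('v \<Rightarrow> int) \<Rightarrow> int) \<Rightarrow> bool" where
  const: "int_poly_fun (\<lambda>_. c)"
| var: "int_poly_fun (\<lambda>x. x v)"
| add: "int_poly_fun p \<Longrightarrow> int_poly_fun q \<Longrightarrow> int_poly_fun (\<lambda>x. p x + q x)"
| mult: "int_poly_fun p \<Longrightarrow> int_poly_fun q \<Longrightarrow> int_poly_fun (\<lambda>x. p x * q x)"

text \<open>Polynomial walk in \<Gamma>: variable None stands for n, Some j for x_j.\<close>
definition polynomial_walk ::
  "(int^'n \<Rightarrow> int^'n) set \<Rightarrow> (nat \<Rightarrow> (int^'n \<Rightarrow> int^'n)) \<Rightarrow> bool" where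
  "polynomial_walk \<Gamma> s \<longleftrightarrow>
     (\<forall>n. s n \<in> \<Gamma>) \<and>
     (\<forall>i. \<exists>q. int_poly_fun q \<and>
        (\<forall>n x. s n x $ i = q (\<lambda>v. case v of None \<Rightarrow> int n | Some j \<Rightarrow> x $ j))) \<and>
     s 0 = id"

inductive_set semigroup_generated :: "('a \<Rightarrow> 'a) set \<Rightarrow> ('a \<Rightarrow> 'a) set"
  for G where
  gen: "g \<in> G \<Longrightarrow> g \<in> semigroup_generated G"
| comp: "f \<in> semigroup_generated G \<Longrightarrow> g \<in> semigroup_generated G \<Longrightarrow>
         f \<circ> g \<in> semigroup_generated G"

definition real_of_intvec :: "int^'n \<Rightarrow> real^'n" where
  "real_of_intvec v = (\<chi> i. real_of_int (v $ i))"

definition hyperplane_fleeing :: "'a::real_vector set \<Rightarrow> bool" where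
  "hyperplane_fleeing S \<longleftrightarrow> (\<forall>A. affine A \<and> S \<subseteq> A \<longrightarrow> A = UNIV)"

end

theory Submission
  imports Defs
begin

lemma ipf_subst:
  assumes "int_poly_fun q" "\<And>w. int_poly_fun (\<sigma> w)"
  shows "int_poly_fun (\<lambda>y. q (\<lambda>w. \<sigma> w y))"
  using assms(1) by induction (auto intro: int_poly_fun.intros assms(2))

lemma ipf_poly: "int_poly_fun (\<lambda>y. poly P (y w))"
proof (induction P rule: pCons_induct)
  case 0
  then show ?case using int_poly_fun.const[of 0] by simp
next
  case (pCons a p)
  have "int_poly_fun (\<lambda>y. a + y w * poly p (y w))"
    by (intro int_poly_fun.intros pCons.IH)
  then show ?case by simp
qed

definition ev :: "'a::comm_ring_1 poly poly \<Rightarrow> 'a \<Rightarrow> 'a \<Rightarrow> 'a" where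
  "ev P x y = poly (poly P [:x:]) y"

lemma ev_add[simp]: "ev (P + Q) x y = ev P x y + ev Q x y" by (simp add: ev_def)
lemma ev_diff[simp]: "ev (P - Q) x y = ev P x y - ev Q x y" by (simp add: ev_def)
lemma ev_mult[simp]: "ev (P * Q) x y = ev P x y * ev Q x y" by (simp add: ev_def)
lemma ev_const[simp]: "ev [:[:c:]:] x y = c" by (simp add: ev_def)
lemma ev_X[simp]: "ev [:0, 1:] x y = x" by (simp add: ev_def)
lemma ev_Y[simp]: "ev [:[:0, 1:]:] x y = y" by (simp add: ev_def)
lemma ev_smult[simp]: "ev (smult [:c:] P) x y = c * ev P x y" by (simp add: ev_def)
lemma ev_sum: "ev (sum f A) x y = (\<Sum>i\<in>A. ev (f i) x y)"
  by (simp add: ev_def poly_sum)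
lemma ev_0[simp]: "ev 0 x y = 0" by (simp add: ev_def)

lemma ev_subst:
  fixes PP :: "'v \<Rightarrow> 'a::comm_ring_1 poly poly"
  assumes "int_poly_fun q"
  shows "\<exists>Q. \<forall>x y e. (\<forall>w. of_int (e w) = ev (PP w) x y) \<longrightarrow> of_int (q e) = ev Q x y"
  using assms
proof induction
  case (const c)
  show ?case by (rule exI[of _ "[:[:of_int c:]:]"]) simp
next
  case (var v)
  show ?case by (rule exI[of _ "PP v"]) simp
next
  case (add p q)
  then obtain Q1 Q2 where "\<forall>x y e. (\<forall>w. of_int (e w) = ev (PP w) x y) \<longrightarrow> of_int (p e) = ev Q1 x y"
    "\<forall>x y e. (\<forall>w. of_int (e w) = ev (PP w) x y) \<longrightarrow> of_int (q e) = ev Q2 x y" by blast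
  note h = this
  show ?case
  proof (intro exI[of _ "Q1 + Q2"] allI impI)
    fix x y e assume a: "\<forall>w. of_int (e w) = ev (PP w) x y"
    show "of_int (p e + q e) = ev (Q1 + Q2) x y"
      using h(1)[rule_format, OF a[rule_format]] h(2)[rule_format, OF a[rule_format]] by simp
  qed
next
  case (mult p q)
  then obtain Q1 Q2 where "\<forall>x y e. (\<forall>w. of_int (e w) = ev (PP w) x y) \<longrightarrow> of_int (p e) = ev Q1 x y"
    "\<forall>x y e. (\<forall>w. of_int (e w) = ev (PP w) x y) \<longrightarrow> of_int (q e) = ev Q2 x y" by blast
  note h = this
  show ?case
  proof (intro exI[of _ "Q1 * Q2"] allI impI)
    fix x y e assume a: "\<forall>w. of_int (e w) = ev (PP w) x y"
    show "of_int (p e * q e) = ev (Q1 * Q2) x y"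
      using h(1)[rule_format, OF a[rule_format]] h(2)[rule_format, OF a[rule_format]] by simp
  qed
qed

section \<open>Kronecker substitution\<close>

lemma poly_poly_subst:
  fixes P :: "'a::comm_ring_1 poly poly"
  shows "poly (poly P q) x = poly (poly P [:poly q x:]) x"
  by (induction P rule: pCons_induct) simp_all

definition kron :: "nat \<Rightarrow> 'a::comm_ring_1 poly poly \<Rightarrow> 'a poly" where
  "kron N P = poly P (monom 1 N)"

lemma poly_kron: "poly (kron N P) x = ev P (x ^ N) x"
  using poly_poly_subst[of P "monom 1 N" x] by (simp add: kron_def ev_def poly_monom)

lemma kron_pCons: "kron N (pCons c P) = c + monom 1 N * kron N P"
  by (simp add: kron_def)

lemma coeff_kron:
  assumes "N > 0" "\<forall>k. degree (coeff P k) < N" "j < N"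
  shows "coeff (kron N P) (k * N + j) = coeff (coeff P k) j"
  using assms(2)
proof (induction P arbitrary: k rule: pCons_induct)
  case 0
  then show ?case by (simp add: kron_def)
next
  case (pCons c P)
  have hP: "\<forall>k. degree (coeff P k) < N" using pCons.prems by (metis coeff_pCons_Suc)
  have hc: "degree c < N" using pCons.prems by (metis coeff_pCons_0)
  show ?case
  proof (cases k)
    case 0
    then show ?thesis using assms(3) by (simp add: kron_pCons coeff_monom_mult)
  next
    case (Suc k')
    have le: "N \<le> k * N + j" using Suc by simp
    have "coeff c (k * N + j) = 0" using hc le by (intro coeff_eq_0) simp
    moreover have "k * N + j - N = k' * N + j" using Suc by simp
    ultimately show ?thesis using pCons.IH[OF hP, of k'] le Suc
      by (simp add: kron_pCons coeff_monom_mult not_less)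
  qed
qed

lemma kron_inj:
  assumes "N > 0" "\<forall>k. degree (coeff P k) < N" "kron N P = 0"
  shows "P = 0"
proof -
  have "coeff (coeff P k) j = 0" for k j
  proof (cases "j < N")
    case True
    then show ?thesis using coeff_kron[OF assms(1,2) True, of k] assms(3)
      by (metis coeff_0)
  next
    case False
    then show ?thesis using assms(2) by (intro coeff_eq_0) (meson leI less_le_trans)
  qed
  then show ?thesis by (intro poly_eqI) (simp add: poly_eqI)
qed

definition bnd :: "nat \<Rightarrow> 'a::comm_ring_1 poly poly \<Rightarrow> bool" where
  "bnd N P \<longleftrightarrow> (\<forall>k. degree (coeff P k) < N)"

lemma bnd_diff: "bnd N P \<Longrightarrow> bnd N Q \<Longrightarrow> bnd N (P - Q)"
  unfolding bnd_def by (metis coeff_diff degree_diff_le_max le_less_trans max_less_iff_conj)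

lemma bnd_add: "bnd N P \<Longrightarrow> bnd N Q \<Longrightarrow> bnd N (P + Q)"
  unfolding bnd_def by (metis coeff_add degree_add_le_max le_less_trans max_less_iff_conj)

lemma bnd_smult: "bnd N P \<Longrightarrow> bnd N (smult [:c:] P)"
  unfolding bnd_def
  by (metis coeff_smult degree_mult_le degree_pCons_0 add_0 le_less_trans)

lemma bnd_const: "N > 0 \<Longrightarrow> bnd N [:[:c:]:]"
  unfolding bnd_def by (auto simp: coeff_pCons split: nat.split)

lemma bnd_zero: "N > 0 \<Longrightarrow> bnd N 0"
  unfolding bnd_def by simp

lemma bnd_sum: "N > 0 \<Longrightarrow> (\<And>i. i \<in> A \<Longrightarrow> bnd N (f i)) \<Longrightarrow> bnd N (sum f A)"
  by (induction A rule: infinite_finite_induct) (auto intro: bnd_zero bnd_add)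

lemma poly_map_of_int:
  "poly (map_poly (of_int :: int \<Rightarrow> 'a::comm_ring_1) p) (of_int x) = of_int (poly p x)"
  by (induction p rule: pCons_induct) (simp_all add: map_poly_pCons)


lemma walk_coord:
  assumes "polynomial_walk \<Gamma> S"
  shows "\<exists>Q. (\<forall>i. int_poly_fun (Q i)) \<and>
    (\<forall>i n x. S n x $ i = Q i (\<lambda>w. case w of None \<Rightarrow> int n | Some j \<Rightarrow> x $ j))"
proof -
  have "\<forall>i. \<exists>q. int_poly_fun q \<and>
        (\<forall>n x. S n x $ i = q (\<lambda>w. case w of None \<Rightarrow> int n | Some j \<Rightarrow> x $ j))"
    using assms unfolding polynomial_walk_def by blast
  then show ?thesis by metis
qed

lemma walk_comp:
  assumes cl: "\<And>f g. f \<in> \<Gamma> \<Longrightarrow> g \<in> \<Gamma> \<Longrightarrow> f \<circ> g \<in> \<Gamma>"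
    and w1: "polynomial_walk \<Gamma> S1" and w2: "polynomial_walk \<Gamma> S2"
  shows "polynomial_walk \<Gamma> (\<lambda>n. S1 n \<circ> S2 n)"
proof -
  obtain Q1 where Q1: "\<forall>i. int_poly_fun (Q1 i)"
    "\<forall>i n x. S1 n x $ i = Q1 i (\<lambda>w. case w of None \<Rightarrow> int n | Some j \<Rightarrow> x $ j)"
    using walk_coord[OF w1] by blast
  obtain Q2 where Q2: "\<forall>i. int_poly_fun (Q2 i)"
    "\<forall>i n x. S2 n x $ i = Q2 i (\<lambda>w. case w of None \<Rightarrow> int n | Some j \<Rightarrow> x $ j)"
    using walk_coord[OF w2] by blast
  define \<sigma> where "\<sigma> = (\<lambda>w. case w of None \<Rightarrow> (\<lambda>y. y None) | Some j \<Rightarrow> Q2 j)"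
  have \<sigma>: "int_poly_fun (\<sigma> w)" for w
    using Q2(1) by (cases w) (auto simp: \<sigma>_def intro: int_poly_fun.var)
  have "\<exists>q. int_poly_fun q \<and>
        (\<forall>n x. (S1 n \<circ> S2 n) x $ i = q (\<lambda>w. case w of None \<Rightarrow> int n | Some j \<Rightarrow> x $ j))" for i
  proof (intro exI conjI allI)
    show "int_poly_fun (\<lambda>y. Q1 i (\<lambda>w. \<sigma> w y))"
      using ipf_subst[OF Q1(1)[rule_format] \<sigma>] .
    fix n x
    have "(\<lambda>w. case w of None \<Rightarrow> int n | Some j \<Rightarrow> S2 n x $ j) =
          (\<lambda>w. \<sigma> w (\<lambda>w. case w of None \<Rightarrow> int n | Some j \<Rightarrow> x $ j))"
      using Q2(2) by (auto simp: \<sigma>_def split: option.split)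
    then show "(S1 n \<circ> S2 n) x $ i = Q1 i (\<lambda>w. \<sigma> w (\<lambda>w. case w of None \<Rightarrow> int n | Some j \<Rightarrow> x $ j))"
      using Q1(2) by (metis comp_apply)
  qed
  then show ?thesis using w1 w2 cl unfolding polynomial_walk_def by auto
qed

lemma walk_reparam:
  fixes S :: "nat \<Rightarrow> int^'n \<Rightarrow> int^'n"
  assumes w: "polynomial_walk \<Gamma> S" and a0: "\<alpha> 0 = 0"
    and aP: "\<And>n. int (\<alpha> n) = poly P (int n)"
  shows "polynomial_walk \<Gamma> (\<lambda>n. S (\<alpha> n))"
proof -
  obtain Q where Q: "\<forall>i. int_poly_fun (Q i)"
    "\<forall>i n x. S n x $ i = Q i (\<lambda>w. case w of None \<Rightarrow> int n | Some j \<Rightarrow> x $ j)"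
    using walk_coord[OF w] by blast
  define \<sigma> :: "'n option \<Rightarrow> ('n option \<Rightarrow> int) \<Rightarrow> int" where "\<sigma> = (\<lambda>w. case w of None \<Rightarrow> (\<lambda>y. poly P (y None)) | Some j \<Rightarrow> (\<lambda>y. y (Some j)))"
  have \<sigma>: "int_poly_fun (\<sigma> w)" for w
    by (cases w) (auto simp: \<sigma>_def intro: int_poly_fun.var ipf_poly)
  have "\<exists>q. int_poly_fun q \<and>
        (\<forall>n x. S (\<alpha> n) x $ i = q (\<lambda>w. case w of None \<Rightarrow> int n | Some j \<Rightarrow> x $ j))" for i
  proof (intro exI conjI allI)
    show "int_poly_fun (\<lambda>y. Q i (\<lambda>w. \<sigma> w y))"
      using ipf_subst[OF Q(1)[rule_format] \<sigma>] .
    fix n x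
    have "(\<lambda>w. case w of None \<Rightarrow> int (\<alpha> n) | Some j \<Rightarrow> x $ j) =
          (\<lambda>w. \<sigma> w (\<lambda>w. case w of None \<Rightarrow> int n | Some j \<Rightarrow> x $ j))"
      using aP by (auto simp: \<sigma>_def split: option.split)
    then show "S (\<alpha> n) x $ i = Q i (\<lambda>w. \<sigma> w (\<lambda>w. case w of None \<Rightarrow> int n | Some j \<Rightarrow> x $ j))"
      using Q(2) by metis
  qed
  then show ?thesis using w a0 unfolding polynomial_walk_def by auto
qed

lemma walk_id:
  assumes "id \<in> \<Gamma>"
  shows "polynomial_walk \<Gamma> (\<lambda>n. id)"
  unfolding polynomial_walk_def
proof (intro conjI allI)
  fix i
  show "\<exists>q. int_poly_fun q \<and> (\<forall>n x. id x $ i = q (\<lambda>w. case w of None \<Rightarrow> int n | Some j \<Rightarrow> x $ j))"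
    by (intro exI[of _ "\<lambda>y. y (Some i)"]) (auto intro: int_poly_fun.var)
qed (use assms in auto)

lemma walk_gen:
  assumes g: "g \<in> semigroup_generated {s j n | j n. j < r}"
    and walks: "\<And>j. j < r \<Longrightarrow> polynomial_walk \<Gamma> (s j)"
    and cl: "\<And>f g. f \<in> \<Gamma> \<Longrightarrow> g \<in> \<Gamma> \<Longrightarrow> f \<circ> g \<in> \<Gamma>"
  shows "\<exists>T. polynomial_walk \<Gamma> T \<and> T 1 = g"
  using g
proof induction
  case (gen g)
  then obtain j m where jm: "j < r" "g = s j m" by blast
  have "polynomial_walk \<Gamma> (\<lambda>n. s j (m * n))"
    by (rule walk_reparam[OF walks[OF jm(1)], of _ "[:0, int m:]"]) auto
  then show ?case using jm by (intro exI[of _ "\<lambda>n. s j (m * n)"]) auto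
next
  case (comp f g)
  then obtain T1 T2 where "polynomial_walk \<Gamma> T1" "T1 1 = f" "polynomial_walk \<Gamma> T2" "T2 1 = g"
    by blast
  moreover have "polynomial_walk \<Gamma> (\<lambda>n. T1 n \<circ> T2 n)"
    using walk_comp[of \<Gamma> T1 T2] cl calculation by blast
  ultimately show ?case by (intro exI[of _ "\<lambda>n. T1 n \<circ> T2 n"]) (simp del: comp_apply)
qed

lemma walk_curve_poly:
  assumes "polynomial_walk \<Gamma> S"
  shows "\<exists>P::int poly. \<forall>n. S n v $ i = poly P (int n)"
proof -
  obtain Q where Q: "\<forall>i. int_poly_fun (Q i)"
    "\<forall>i n x. S n x $ i = Q i (\<lambda>w. case w of None \<Rightarrow> int n | Some j \<Rightarrow> x $ j)"
    using walk_coord[OF assms] by blast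
  define PP :: "'a option \<Rightarrow> int poly poly" where
    "PP = (\<lambda>w. case w of None \<Rightarrow> [:[:0, 1:]:] | Some k \<Rightarrow> [:[:v $ k:]:])"
  obtain QQ where QQ: "\<forall>x y e. (\<forall>w. of_int (e w) = ev (PP w) x y) \<longrightarrow> of_int (Q i e) = ev QQ x y"
    using ev_subst[OF Q(1)[rule_format], of PP i] by blast
  have "S n v $ i = poly (poly QQ 0) (int n)" for n
  proof -
    have "\<forall>w. of_int ((\<lambda>w. case w of None \<Rightarrow> int n | Some j \<Rightarrow> v $ j) w) = ev (PP w) 0 (int n)"
      by (auto simp: PP_def split: option.split)
    then have "of_int (Q i (\<lambda>w. case w of None \<Rightarrow> int n | Some j \<Rightarrow> v $ j)) = ev QQ 0 (int n)"
      using QQ by blast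
    then show ?thesis using Q(2) by (simp add: ev_def)
  qed
  then show ?thesis by blast
qed


lemma walk_two_param:
  fixes S T :: "nat \<Rightarrow> int^'n \<Rightarrow> int^'n" and v :: "int^'n"
  assumes wS: "polynomial_walk \<Gamma> S" and wT: "polynomial_walk \<Gamma> T"
  shows "\<exists>QQ :: 'n \<Rightarrow> real poly poly. \<forall>i m k.
           real_of_int (T k (S m v) $ i) = ev (QQ i) (real m) (real k)"
proof -
  obtain QS where QS: "\<forall>i. int_poly_fun (QS i)"
    "\<forall>i n x. S n x $ i = QS i (\<lambda>w. case w of None \<Rightarrow> int n | Some j \<Rightarrow> x $ j)"
    using walk_coord[OF wS] by blast
  obtain QT where QT: "\<forall>i. int_poly_fun (QT i)"
    "\<forall>i n x. T n x $ i = QT i (\<lambda>w. case w of None \<Rightarrow> int n | Some j \<Rightarrow> x $ j)"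
    using walk_coord[OF wT] by blast
  define PS :: "'n option \<Rightarrow> real poly poly" where
    "PS = (\<lambda>w. case w of None \<Rightarrow> [:0, 1:] | Some k \<Rightarrow> [:[:of_int (v $ k):]:])"
  have "\<forall>j. \<exists>Q. \<forall>x y e. (\<forall>w. of_int (e w) = ev (PS w) x y) \<longrightarrow> of_int (QS j e) = ev Q x y"
    using ev_subst QS(1) by blast
  then obtain QSS where QSS: "\<forall>j x y e. (\<forall>w. of_int (e w) = ev (PS w) x y) \<longrightarrow>
      of_int (QS j e) = ev (QSS j) x y" by metis
  have hS: "real_of_int (S m v $ j) = ev (QSS j) (real m) y" for m j y
  proof -
    have "\<forall>w. of_int ((\<lambda>w. case w of None \<Rightarrow> int m | Some j \<Rightarrow> v $ j) w) = ev (PS w) (real m) y"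
      by (auto simp: PS_def split: option.split)
    then show ?thesis using QSS QS(2) by metis
  qed
  define PT :: "'n option \<Rightarrow> real poly poly" where
    "PT = (\<lambda>w. case w of None \<Rightarrow> [:[:0, 1:]:] | Some j \<Rightarrow> QSS j)"
  have "\<forall>i. \<exists>Q. \<forall>x y e. (\<forall>w. of_int (e w) = ev (PT w) x y) \<longrightarrow> of_int (QT i e) = ev Q x y"
    using ev_subst QT(1) by blast
  then obtain QTT where QTT: "\<forall>i x y e. (\<forall>w. of_int (e w) = ev (PT w) x y) \<longrightarrow>
      of_int (QT i e) = ev (QTT i) x y" by metis
  show ?thesis
  proof (intro exI allI)
    fix i m k
    have "\<forall>w. of_int ((\<lambda>w. case w of None \<Rightarrow> int k | Some j \<Rightarrow> S m v $ j) w) = ev (PT w) (real m) (real k)"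
      using hS by (auto simp: PT_def split: option.split)
    then show "real_of_int (T k (S m v) $ i) = ev (QTT i) (real m) (real k)"
      using QTT QT(2) by metis
  qed
qed

lemma inner_R: "a \<bullet> real_of_intvec w = (\<Sum>i\<in>UNIV. a $ i * real_of_int (w $ i))"
  by (simp add: inner_vec_def real_of_intvec_def)

lemma step:
  fixes S T :: "nat \<Rightarrow> int^'n \<Rightarrow> int^'n" and v :: "int^'n"
  assumes cl: "\<And>f g. f \<in> \<Gamma> \<Longrightarrow> g \<in> \<Gamma> \<Longrightarrow> f \<circ> g \<in> \<Gamma>"
    and wS: "polynomial_walk \<Gamma> S" and wT: "polynomial_walk \<Gamma> T"
  shows "\<exists>U. polynomial_walk \<Gamma> U \<and> (\<forall>a b. (\<forall>n. a \<bullet> real_of_intvec (U n v) = b) \<longrightarrow>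
            (\<forall>m k. a \<bullet> real_of_intvec (T k (S m v)) = b))"
proof -
  obtain QQ :: "'n \<Rightarrow> real poly poly" where
    QQ: "\<And>i m k. real_of_int (T k (S m v) $ i) = ev (QQ i) (real m) (real k)"
    using walk_two_param[OF wS wT, of v] by blast
  define N where "N = Suc (\<Sum>i\<in>UNIV. \<Sum>k\<le>degree (QQ i). degree (coeff (QQ i) k))"
  have N0: "N > 0" by (simp add: N_def)
  have bQ: "bnd N (QQ i)" for i
    unfolding bnd_def
  proof
    fix k
    show "degree (coeff (QQ i) k) < N"
    proof (cases "k \<le> degree (QQ i)")
      case True
      have "degree (coeff (QQ i) k) \<le> (\<Sum>k\<le>degree (QQ i). degree (coeff (QQ i) k))"
        by (rule member_le_sum) (use True in auto)
      also have "\<dots> \<le> (\<Sum>i\<in>UNIV. \<Sum>k\<le>degree (QQ i). degree (coeff (QQ i) k))"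
        by (rule member_le_sum) auto
      finally show ?thesis unfolding N_def by simp
    next
      case False
      then show ?thesis by (simp add: coeff_eq_0 N0)
    qed
  qed
  define U where "U = (\<lambda>n. T n \<circ> S (n ^ N))"
  have wS': "polynomial_walk \<Gamma> (\<lambda>n. S (n ^ N))"
    by (rule walk_reparam[OF wS, of _ "monom 1 N"]) (use N0 in \<open>auto simp: poly_monom\<close>)
  have wU: "polynomial_walk \<Gamma> U"
    unfolding U_def using walk_comp[OF _ wT wS'] cl by blast
  have ann: "\<forall>m k. a \<bullet> real_of_intvec (T k (S m v)) = b"
    if H: "\<forall>n. a \<bullet> real_of_intvec (U n v) = b" for a b
  proof -
    define RR where "RR = (\<Sum>i\<in>UNIV. smult [:a $ i:] (QQ i)) - [:[:b:]:]"
    have evRR: "ev RR (real m) (real k) = a \<bullet> real_of_intvec (T k (S m v)) - b" for m k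
      by (simp add: RR_def ev_sum inner_R QQ)
    have roots: "poly (kron N RR) (real n) = 0" for n
      using evRR[of "n ^ N" n] H by (simp add: poly_kron U_def)
    have "kron N RR = 0"
    proof (rule ccontr)
      assume "kron N RR \<noteq> 0"
      then have "finite {x. poly (kron N RR) x = 0}" by (rule poly_roots_finite)
      moreover have "(\<nat> :: real set) \<subseteq> {x. poly (kron N RR) x = 0}"
        using roots by (auto simp: Nats_def)
      ultimately show False using Nats_infinite finite_subset by blast
    qed
    moreover have "bnd N RR"
      unfolding RR_def by (intro bnd_diff bnd_sum bnd_smult bnd_const bQ N0)
    ultimately have "RR = 0" using kron_inj N0 unfolding bnd_def by blast
    then show ?thesis using evRR by (metis ev_0 eq_iff_diff_eq_0)
  qed
  show ?thesis using wU ann by blast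
qed


lemma sg_empty: "semigroup_generated {} = {}"
proof -
  have "x \<in> semigroup_generated {} \<Longrightarrow> False" for x :: "'a \<Rightarrow> 'a"
    by (induction rule: semigroup_generated.induct) auto
  then show ?thesis by blast
qed

theorem theorem2p3:
  fixes \<Gamma> :: "(int^'n \<Rightarrow> int^'n) set"
    and r :: nat
    and s :: "nat \<Rightarrow> nat \<Rightarrow> (int^'n \<Rightarrow> int^'n)"
    and v :: "int^'n"
  assumes semigroup: "\<And>f g. f \<in> \<Gamma> \<Longrightarrow> g \<in> \<Gamma> \<Longrightarrow> f \<circ> g \<in> \<Gamma>"
    and walks: "\<And>j. j < r \<Longrightarrow> polynomial_walk \<Gamma> (s j)"
    and generates: "\<Gamma> = semigroup_generated {s j n | j n. j < r}"
    and fleeing: "hyperplane_fleeing {real_of_intvec (g v) | g. g \<in> \<Gamma>}"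
  shows "\<exists>S (p :: 'n \<Rightarrow> int poly).
           polynomial_walk \<Gamma> S \<and>
           (\<forall>n i. S n v $ i = poly (p i) (int n)) \<and>
           (\<forall>(c0::real) (c :: 'n \<Rightarrow> real).
              [:c0:] + (\<Sum>i\<in>UNIV. smult (c i) (map_poly real_of_int (p i))) = 0
              \<longrightarrow> c0 = 0 \<and> (\<forall>i. c i = 0)) \<and>
           hyperplane_fleeing (range (\<lambda>n. real_of_intvec (S n v)))"
  proof -
  let ?R = "real_of_intvec :: int^'n \<Rightarrow> real^'n"
  define Orb where "Orb = {?R (g v) | g. g \<in> \<Gamma>}"
  have hullO: "affine hull Orb = UNIV"
  proof -
    have "affine (affine hull Orb) \<and> Orb \<subseteq> affine hull Orb"
      by (simp add: hull_subset)
    then show ?thesis using fleeing unfolding hyperplane_fleeing_def Orb_def by blast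
  qed
  have "r > 0"
  proof (rule ccontr)
    assume "\<not> r > 0"
    then have "{s j n | j n. j < r} = {}" by auto
    then have "\<Gamma> = {}" using generates sg_empty by metis
    then have "Orb = {}" unfolding Orb_def by simp
    then show False using hullO by simp
  qed
  have idG: "id \<in> \<Gamma>"
  proof -
    have "s 0 0 \<in> \<Gamma> \<and> s 0 0 = id" using walks[OF \<open>r > 0\<close>] unfolding polynomial_walk_def by blast
    then show ?thesis by metis
  qed
  obtain B where B: "B \<subseteq> Orb" "\<not> affine_dependent B" "affine hull Orb = affine hull B"
    using affine_basis_exists by blast
  have finB: "finite B" using aff_independent_finite[OF B(2)] .
  have inv: "\<exists>S. polynomial_walk \<Gamma> S \<and>
      (\<forall>a b. (\<forall>n. a \<bullet> ?R (S n v) = b) \<longrightarrow> (\<forall>h\<in>B'. a \<bullet> h = b))"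
    if "finite B'" "B' \<subseteq> Orb" for B'
    using that
  proof (induction B' rule: finite_induct)
    case empty
    show ?case using walk_id[OF idG] by blast
  next
    case (insert x F)
    then obtain S where S: "polynomial_walk \<Gamma> S"
      "\<forall>a b. (\<forall>n. a \<bullet> ?R (S n v) = b) \<longrightarrow> (\<forall>h\<in>F. a \<bullet> h = b)" by auto
    from insert obtain g where g: "g \<in> \<Gamma>" "x = ?R (g v)" unfolding Orb_def by auto
    obtain T where T: "polynomial_walk \<Gamma> T" "T 1 = g"
      using walk_gen[of g s r \<Gamma>] g(1) generates walks semigroup by auto
    obtain U where U: "polynomial_walk \<Gamma> U" "\<forall>a b. (\<forall>n. a \<bullet> ?R (U n v) = b) \<longrightarrow>
            (\<forall>m k. a \<bullet> ?R (T k (S m v)) = b)"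
      using step[OF semigroup S(1) T(1), of v] by blast
    have T0: "T 0 = id" and S0: "S 0 = id" using T(1) S(1) unfolding polynomial_walk_def by auto
    show ?case
    proof (intro exI conjI allI impI)
      show "polynomial_walk \<Gamma> U" by (rule U(1))
      fix a b assume H: "\<forall>n. a \<bullet> ?R (U n v) = b"
      then have all: "\<forall>m k. a \<bullet> ?R (T k (S m v)) = b" using U(2) by blast
      then have "\<forall>m. a \<bullet> ?R (S m v) = b" using T0 by (metis id_apply)
      then have "\<forall>h\<in>F. a \<bullet> h = b" using S(2) by blast
      moreover have "a \<bullet> x = b" using all[rule_format, of 1 0] S0 T(2) g(2) by simp
      ultimately show "\<forall>h\<in>insert x F. a \<bullet> h = b" by blast
    qed
  qed
  obtain S where S: "polynomial_walk \<Gamma> S"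
      "\<forall>a b. (\<forall>n. a \<bullet> ?R (S n v) = b) \<longrightarrow> (\<forall>h\<in>B. a \<bullet> h = b)"
    using inv[OF finB B(1)] by blast
  define C where "C = range (\<lambda>n. ?R (S n v))"
  have BC: "B \<subseteq> affine hull C"
  proof -
    obtain \<F> where F: "affine hull C = \<Inter>\<F>"
      "\<And>h. h \<in> \<F> \<Longrightarrow> \<exists>a b. a \<noteq> 0 \<and> h = {x. a \<bullet> x = b}"
      using affine_hull_finite_intersection_hyperplanes[of C] by metis
    have "B \<subseteq> h" if hF: "h \<in> \<F>" for h
    proof -
      obtain a b where h: "h = {x. a \<bullet> x = b}" using F(2)[OF hF] by blast
      have "C \<subseteq> h" using F(1) hF hull_subset[of C affine] by blast
      then have "\<forall>n. a \<bullet> ?R (S n v) = b" unfolding C_def h by auto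
      then have "\<forall>x\<in>B. a \<bullet> x = b" using S(2) by blast
      then show ?thesis unfolding h by blast
    qed
    then show ?thesis using F(1) by blast
  qed
  have Cfull: "affine hull C = UNIV"
    using hull_minimal[OF BC, of affine, OF affine_affine_hull] B(3) hullO by auto
  have fleeC: "hyperplane_fleeing C"
    unfolding hyperplane_fleeing_def
  proof (intro allI impI)
    fix A :: "(real^'n) set" assume "affine A \<and> C \<subseteq> A"
    then have "affine hull C \<subseteq> A" by (simp add: hull_minimal)
    then show "A = UNIV" using Cfull by auto
  qed
  have "\<forall>i. \<exists>P::int poly. \<forall>n. S n v $ i = poly P (int n)"
    using walk_curve_poly[OF S(1)] by blast
  from choice[OF this] obtain p :: "'n \<Rightarrow> int poly" where p: "\<And>i n. S n v $ i = poly (p i) (int n)" by blast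
  show ?thesis
  proof (intro exI conjI)
    show "polynomial_walk \<Gamma> S" by (rule S(1))
    show "\<forall>n i. S n v $ i = poly (p i) (int n)" using p by blast
    show "hyperplane_fleeing (range (\<lambda>n. ?R (S n v)))" using fleeC unfolding C_def .
    show "\<forall>(c0::real) (c :: 'n \<Rightarrow> real).
              [:c0:] + (\<Sum>i\<in>UNIV. smult (c i) (map_poly real_of_int (p i))) = 0
              \<longrightarrow> c0 = 0 \<and> (\<forall>i. c i = 0)"
    proof (intro allI impI)
      fix c0 :: real and c :: "'n \<Rightarrow> real"
      assume eq: "[:c0:] + (\<Sum>i\<in>UNIV. smult (c i) (map_poly real_of_int (p i))) = 0"
      define a :: "real^'n" where "a = (\<chi> i. c i)"
      have "a \<bullet> ?R (S n v) = - c0" for n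
      proof -
        have "poly ([:c0:] + (\<Sum>i\<in>UNIV. smult (c i) (map_poly real_of_int (p i)))) (of_int (int n)) = 0"
          using eq by simp
        then have "c0 + (\<Sum>i\<in>UNIV. c i * real_of_int (poly (p i) (int n))) = 0"
          by (simp add: poly_sum poly_map_of_int del: of_int_of_nat_eq)
        then show ?thesis by (simp add: inner_R a_def p)
      qed
      then have "C \<subseteq> {x. a \<bullet> x = - c0}" unfolding C_def by auto
      then have all: "{x. a \<bullet> x = - c0} = UNIV"
        using fleeC affine_hyperplane unfolding hyperplane_fleeing_def by blast
      have "a \<bullet> 0 = - c0" using all by blast
      then have c0: "c0 = 0" by simp
      have "c i = 0" for i
      proof -
        have "a \<bullet> axis i 1 = - c0" using all by blast
        then show ?thesis using c0 by (simp add: a_def cart_eq_inner_axis[symmetric])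
      qed
      then show "c0 = 0 \<and> (\<forall>i. c i = 0)" using c0 by blast
    qed
  qed
qed

end
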